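(* Let $(X,d)$ be a compact metric space, $\Omega\subset X$ a nonempty open set, $\ell\in\mathcal C(\Omega)$ with $\inf_\Omega\ell>0$, and $g\in\mathcal C(\partial\Omega)$. Then the problem "$s[u](x)=\ell(x)$ for all $x\in\Omega$, $u(x)=g(x)$ for all $x\in\partial\Omega$" admits at most one continuous pointwise solution $u:\overline\Omega\to\mathbb{R}$, and if such a solution exists it is given for $x\in\Omega$ by \[ u(x)=\inf\Big\{\int_0^T\ell(\gamma(s))\,ds+g(\gamma(T)) : T>0,\ \gamma\in\mathrm{Lip}_1([0,T],\overline\Omega),\ \gamma(0)=x,\ \gamma(T)\in\partial\Omega,\ \gamma([0,T))\subset\Omega\Big\}. \]
   Context: $\mathcal C(A)$ denotes real-valued continuous functions on $A$; $\mathrm{Lip}_1([0,T],Y)$ the $1$-Lipschitz curves $[0,T]\to Y$. Local slope: $s[u](\bar x):=\limsup_{x\to\bar x}\frac{\max\{u(\bar x)-u(x),0\}}{d(\bar x,x)}$ (zero if $\bar x$ is isolated). A continuous pointwise solution is a continuous $u:\overline\Omega\to\mathbb{R}$ with $s[u](x)=\ell(x)$ for every $x\in\Omega$ (slope computed in $\overline\Omega$) and $u=g$ on $\partial\Omega$. Convention $\inf\emptyset=+\infty$. *)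

theory Defs
  imports "HOL-Analysis.Analysis"
begin

definition local_slope :: "'a::metric_space set \<Rightarrow> ('a \<Rightarrow> real) \<Rightarrow> 'a \<Rightarrow> ereal" where
  "local_slope A u xb =
     (if xb islimpt A
      then Limsup (at xb within A) (\<lambda>x. ereal (max (u xb - u x) 0 / dist xb x))
      else 0)"

definition cont_pointwise_solution ::
  "'a::metric_space set \<Rightarrow> ('a \<Rightarrow> real) \<Rightarrow> ('a \<Rightarrow> real) \<Rightarrow> ('a \<Rightarrow> real) \<Rightarrow> bool" where
  "cont_pointwise_solution \<Omega> l g u \<longleftrightarrow>
     continuous_on (closure \<Omega>) u \<and>
     (\<forall>x\<in>\<Omega>. local_slope (closure \<Omega>) u x = ereal (l x)) \<and>
     (\<forall>x\<in>frontier \<Omega>. u x = g x)"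

definition admissible_curves :: "'a::metric_space set \<Rightarrow> 'a \<Rightarrow> (real \<times> (real \<Rightarrow> 'a)) set" where
  "admissible_curves \<Omega> x = {(T, \<gamma>). T > 0 \<and> 1-lipschitz_on {0..T} \<gamma> \<and>
       \<gamma> ` {0..T} \<subseteq> closure \<Omega> \<and> \<gamma> 0 = x \<and> \<gamma> T \<in> frontier \<Omega> \<and> \<gamma> ` {0..<T} \<subseteq> \<Omega>}"

definition curve_cost :: "('a \<Rightarrow> real) \<Rightarrow> ('a \<Rightarrow> real) \<Rightarrow> real \<Rightarrow> (real \<Rightarrow> 'a) \<Rightarrow> ereal" where
  "curve_cost l g T \<gamma> =
     enn2ereal (\<integral>\<^sup>+ s. ennreal (l (\<gamma> s)) * indicator {0..T} s \<partial>lborel) + ereal (g (\<gamma> T))"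

end

theory Submission
  imports Defs "HOL-Complex_Analysis.Great_Picard"
begin


lemma Limsup_gt_ex:
  assumes "ereal a < Limsup F f" "eventually P F"
  shows "\<exists>x. P x \<and> ereal a < f x"
proof -
  have "ereal a < Sup (f ` {x. P x})"
    using assms(1) unfolding Limsup_def by (rule less_INF_D) (use assms(2) in auto)
  then show ?thesis by (auto simp: less_Sup_iff)
qed

lemma cont_induct_right:
  fixes \<psi> :: "real \<Rightarrow> real"
  assumes ab: "a \<le> b" and cont: "continuous_on {a..b} \<psi>" and start: "\<psi> a \<ge> 0"
    and step: "\<And>m. m \<in> {a..<b} \<Longrightarrow> \<psi> m \<ge> 0 \<Longrightarrow> \<exists>h>0. \<forall>s. m < s \<and> s \<le> m + h \<and> s \<le> b \<longrightarrow> \<psi> s \<ge> 0"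
  shows "\<forall>t\<in>{a..b}. \<psi> t \<ge> 0"
proof -
  define S where "S = {t\<in>{a..b}. \<forall>s\<in>{a..t}. \<psi> s \<ge> 0}"
  have aS: "a \<in> S" using start ab by (auto simp: S_def)
  have bdd: "bdd_above S" unfolding S_def by (rule bdd_aboveI[of _ b]) auto
  define m where "m = Sup S"
  have am: "a \<le> m" using aS bdd unfolding m_def by (meson cSup_upper)
  have mb: "m \<le> b" unfolding m_def using aS by (intro cSup_least) (auto simp: S_def)
  have below: "\<psi> s \<ge> 0" if "a \<le> s" "s < m" for s
  proof -
    obtain t where "t \<in> S" "s < t" using \<open>s < m\<close> aS bdd unfolding m_def by (metis empty_iff less_cSup_iff)
    then show ?thesis using that by (auto simp: S_def)
  qed
  have pm: "\<psi> m \<ge> 0"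
  proof (rule ccontr)
    assume neg: "\<not> 0 \<le> \<psi> m"
    then have "m \<noteq> a" using start by auto
    then have "a < m" using am by auto
    have "m \<in> {a..b}" using am mb by auto
    from cont[unfolded continuous_on_iff, rule_format, OF this, of "- \<psi> m"] neg
    obtain e where e: "e > 0" "\<And>s. s \<in> {a..b} \<Longrightarrow> dist s m < e \<Longrightarrow> dist (\<psi> s) (\<psi> m) < - \<psi> m"
      by auto
    define s where "s = max a (m - e/2)"
    have "s \<in> {a..b}" "dist s m < e" "a \<le> s" "s < m" using e(1) \<open>a < m\<close> mb by (auto simp: s_def dist_real_def)
    then have "dist (\<psi> s) (\<psi> m) < - \<psi> m" "\<psi> s \<ge> 0" using e(2) below by auto
    then show False by (auto simp: dist_real_def)
  qed
  have mS: "m \<in> S" using pm below am mb by (auto simp: S_def) (metis order.not_eq_order_implies_strict)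
  have "m = b"
  proof (rule ccontr)
    assume "m \<noteq> b"
    then have "m \<in> {a..<b}" using am mb by auto
    from step[OF this pm] obtain h where h: "h > 0" "\<And>s. m < s \<Longrightarrow> s \<le> m + h \<Longrightarrow> s \<le> b \<Longrightarrow> \<psi> s \<ge> 0"
      by auto
    define t where "t = min (m + h) b"
    have "t \<in> S" using mS h \<open>m \<in> {a..<b}\<close> unfolding S_def t_def
      by (auto simp: not_le)
    then have "t \<le> m" unfolding m_def using bdd by (rule cSup_upper)
    then show False using h \<open>m \<in> {a..<b}\<close> by (auto simp: t_def)
  qed
  then show ?thesis using mS by (auto simp: S_def)
qed

locale eik =
  fixes \<Omega> :: "'a::metric_space set" and l u :: "'a \<Rightarrow> real" and c :: real
  assumes cpt: "compact (UNIV::'a set)" and opn: "open \<Omega>"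
    and lcont: "continuous_on \<Omega> l" and cpos: "0 < c" and lc: "\<And>x. x\<in>\<Omega> \<Longrightarrow> c \<le> l x"
    and ucont: "continuous_on (closure \<Omega>) u"
    and slope: "\<And>x. x\<in>\<Omega> \<Longrightarrow> local_slope (closure \<Omega>) u x = ereal (l x)"
begin

lemma lpos: "x \<in> \<Omega> \<Longrightarrow> 0 < l x"
  using lc[of x] cpos by linarith

lemma limpt: assumes "x \<in> \<Omega>" shows "x islimpt closure \<Omega>"
proof (rule ccontr)
  assume "\<not> x islimpt closure \<Omega>"
  then have "local_slope (closure \<Omega>) u x = 0" by (simp add: local_slope_def)
  with slope[OF assms] lpos[OF assms] show False by simp
qed

lemma slope_upper:
  assumes "x \<in> \<Omega>" "l x < a"
  obtains \<delta> where "\<delta> > 0" "\<And>y. y \<in> closure \<Omega> \<Longrightarrow> y \<noteq> x \<Longrightarrow> dist y x < \<delta> \<Longrightarrow> u x - u y \<le> a * dist x y"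
proof -
  have "Limsup (at x within closure \<Omega>) (\<lambda>y. ereal (max (u x - u y) 0 / dist x y)) < ereal a"
    using slope[OF assms(1)] limpt[OF assms(1)] assms(2) by (simp add: local_slope_def)
  from Limsup_lessD[OF this] obtain \<delta> where d: "\<delta>>0"
    "\<And>y. y\<in>closure \<Omega> \<Longrightarrow> y \<noteq> x \<Longrightarrow> dist y x < \<delta> \<Longrightarrow> max (u x - u y) 0 / dist x y < a"
    by (auto simp: eventually_at)
  show thesis
  proof (rule that[OF d(1)])
    fix y assume y: "y \<in> closure \<Omega>" "y \<noteq> x" "dist y x < \<delta>"
    then have dp: "dist x y > 0" by simp
    have "max (u x - u y) 0 / dist x y < a" using d(2)[OF y] .
    then have "max (u x - u y) 0 < a * dist x y" using dp by (simp add: divide_less_eq)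
    then show "u x - u y \<le> a * dist x y" by linarith
  qed
qed

lemma slope_lower:
  assumes "x \<in> \<Omega>" "a < l x" "r > 0"
  obtains y where "y \<in> closure \<Omega>" "0 < dist x y" "dist x y < r" "a * dist x y < max (u x - u y) 0"
proof -
  have "ereal a < Limsup (at x within closure \<Omega>) (\<lambda>y. ereal (max (u x - u y) 0 / dist x y))"
    using slope[OF assms(1)] limpt[OF assms(1)] assms(2) by (simp add: local_slope_def)
  moreover have "eventually (\<lambda>y. y \<in> closure \<Omega> \<and> y \<noteq> x \<and> dist y x < r) (at x within closure \<Omega>)"
    using assms(3) by (auto simp: eventually_at)
  ultimately obtain y where y: "y \<in> closure \<Omega>" "y \<noteq> x" "dist y x < r"
    "ereal a < ereal (max (u x - u y) 0 / dist x y)"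
    using Limsup_gt_ex by blast
  then have dp: "dist x y > 0" by simp
  from y(4) have "a < max (u x - u y) 0 / dist x y" by simp
  then have "a * dist x y < max (u x - u y) 0" using dp by (simp add: less_divide_eq)
  then show thesis using that y dp by (simp add: dist_commute)
qed

lemma partA_ineq:
  fixes \<gamma> :: "real \<Rightarrow> 'a" and T :: real
  assumes T: "0 < T" and lip: "1-lipschitz_on {0..T} \<gamma>" and inO: "\<gamma> ` {0..<T} \<subseteq> \<Omega>"
    and t1: "t1 \<in> {0..<T}" and eta: "\<eta> > 0"
  shows "u (\<gamma> 0) \<le> u (\<gamma> t1) + integral {0..t1} (\<lambda>s. l (\<gamma> s)) + \<eta> * t1"
proof -
  have sub01: "{0..t1} \<subseteq> {0..T}" using t1 by auto
  have lip1: "1-lipschitz_on {0..t1} \<gamma>" using lipschitz_on_subset[OF lip sub01] .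
  have gc: "continuous_on {0..t1} \<gamma>" using lipschitz_on_continuous_on[OF lip1] .
  have sub: "\<gamma> ` {0..t1} \<subseteq> \<Omega>" using inO t1 by auto
  have fc: "continuous_on {0..t1} (\<lambda>s. l (\<gamma> s))"
    using continuous_on_compose2[OF lcont gc sub] .
  have ugc: "continuous_on {0..t1} (\<lambda>s. u (\<gamma> s))"
    using continuous_on_compose2[OF ucont gc] sub closure_subset by blast
  have int: "(\<lambda>s. l (\<gamma> s)) integrable_on {0..t1}" using integrable_continuous_interval[OF fc] .
  define \<psi> where "\<psi> t = u (\<gamma> t) + integral {0..t} (\<lambda>s. l (\<gamma> s)) + \<eta> * t - u (\<gamma> 0)" for t
  have pc: "continuous_on {0..t1} \<psi>" unfolding \<psi>_def
    by (intro continuous_intros ugc indefinite_integral_continuous_1 int)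
  have p0: "\<psi> 0 \<ge> 0" by (simp add: \<psi>_def)
  have step: "\<exists>h>0. \<forall>s. m < s \<and> s \<le> m + h \<and> s \<le> t1 \<longrightarrow> \<psi> s \<ge> 0"
    if m: "m \<in> {0..<t1}" and pm: "\<psi> m \<ge> 0" for m
  proof -
    define p where "p = \<gamma> m"
    have pO: "p \<in> \<Omega>" using sub m by (auto simp: p_def)
    obtain \<delta> where d: "\<delta> > 0" "\<And>y. y \<in> closure \<Omega> \<Longrightarrow> y \<noteq> p \<Longrightarrow> dist y p < \<delta> \<Longrightarrow> u p - u y \<le> (l p + \<eta>/3) * dist p y"
      using slope_upper[OF pO, of "l p + \<eta>/3"] eta by auto
    have mI: "m \<in> {0..t1}" using m by auto
    from fc[unfolded continuous_on_iff, rule_format, OF mI, of "\<eta>/3"] eta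
    obtain h1 where h1: "h1 > 0" "\<And>s. s \<in> {0..t1} \<Longrightarrow> dist s m < h1 \<Longrightarrow> dist (l (\<gamma> s)) (l p) < \<eta>/3"
      by (auto simp: p_def)
    define h where "h = min (\<delta>/2) (h1/2)"
    have hp: "h > 0" using d h1 by (simp add: h_def)
    show ?thesis
    proof (intro exI[of _ h] conjI allI impI hp)
      fix s assume s: "m < s \<and> s \<le> m + h \<and> s \<le> t1"
      have sI: "s \<in> {0..t1}" using s m by auto
      have int0s: "(\<lambda>s. l (\<gamma> s)) integrable_on {0..s}"
        by (rule integrable_on_subinterval[OF int]) (use s in auto)
      have intms': "(\<lambda>s. l (\<gamma> s)) integrable_on {m..s}"
        by (rule integrable_on_subinterval[OF int]) (use s m in auto)
      have intms: "integral {0..s} (\<lambda>s. l (\<gamma> s)) = integral {0..m} (\<lambda>s. l (\<gamma> s)) + integral {m..s} (\<lambda>s. l (\<gamma> s))"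
        using Henstock_Kurzweil_Integration.integral_combine[where a=0 and c=m and b=s, OF _ _ int0s] m s by simp
      have lowf: "l p - \<eta>/3 \<le> l (\<gamma> x)" if "x \<in> {m..s}" for x
      proof -
        have "x \<in> {0..t1}" "dist x m < h1" using that s m h_def h1 by (auto simp: dist_real_def)
        then have "dist (l (\<gamma> x)) (l p) < \<eta>/3" using h1(2) by blast
        then show ?thesis unfolding dist_real_def by linarith
      qed
      have "integral {m..s} (\<lambda>x. l p - \<eta>/3) \<le> integral {m..s} (\<lambda>s. l (\<gamma> s))"
        using lowf intms' m s
        by (intro integral_le) auto
      then have intlow: "(l p - \<eta>/3) * (s - m) \<le> integral {m..s} (\<lambda>s. l (\<gamma> s))"
        using s by (simp add: content_real mult.commute)
      have dg: "dist (\<gamma> s) p \<le> s - m"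
        using lipschitz_onD[OF lip1 sI mI] s by (simp add: p_def dist_real_def)
      have ulow: "u p - u (\<gamma> s) \<le> (l p + \<eta>/3) * (s - m)"
      proof (cases "\<gamma> s = p")
        case True
        then show ?thesis using s lpos[OF pO] eta by simp
      next
        case False
        have "\<gamma> s \<in> closure \<Omega>" using sub sI closure_subset by blast
        moreover have "dist (\<gamma> s) p < \<delta>" using dg s d(1) unfolding h_def by linarith
        ultimately have "u p - u (\<gamma> s) \<le> (l p + \<eta>/3) * dist p (\<gamma> s)" using d(2) False by blast
        also have "\<dots> \<le> (l p + \<eta>/3) * (s - m)"
          using dg lpos[OF pO] eta by (intro mult_left_mono) (auto simp: dist_commute)
        finally show ?thesis .
      qed
      define A where "A = s - m"
      have f1: "u p - u (\<gamma> s) \<le> l p * A + \<eta> * A / 3"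
        using ulow unfolding A_def by (simp add: algebra_simps)
      have f2: "l p * A - \<eta> * A / 3 \<le> integral {m..s} (\<lambda>s. l (\<gamma> s))"
        using intlow unfolding A_def by (simp add: algebra_simps)
      have f3: "\<psi> s - \<psi> m = (u (\<gamma> s) - u p) + integral {m..s} (\<lambda>s. l (\<gamma> s)) + \<eta> * A"
        unfolding \<psi>_def p_def A_def using intms by (simp add: algebra_simps)
      have "\<eta> * A > 0" using s eta unfolding A_def by simp
      then show "\<psi> s \<ge> 0" using f1 f2 f3 pm by linarith
    qed
  qed
  have "\<forall>t\<in>{0..t1}. \<psi> t \<ge> 0"
    using cont_induct_right[OF _ pc p0 step] t1 by auto
  then have "\<psi> t1 \<ge> 0" using t1 by auto
  then show ?thesis by (simp add: \<psi>_def)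
qed

lemma nn_le_of_integral:
  fixes f :: "real \<Rightarrow> real" and t1 T :: real
  assumes "t1 \<le> T" "continuous_on {0..t1} f" "\<And>s. s \<in> {0..t1} \<Longrightarrow> 0 \<le> f s"
  shows "ennreal (integral {0..t1} f) \<le> (\<integral>\<^sup>+ s. ennreal (f s) * indicator {0..T} s \<partial>lborel)"
proof -
  have hi: "(f has_integral integral {0..t1} f) {0..t1}"
    using integrable_continuous_interval[OF assms(2)] by (simp add: integrable_integral)
  have "ennreal (integral {0..t1} f) = (\<integral>\<^sup>+ s. ennreal (indicator {0..t1} s * f s) \<partial>lborel)"
    using nn_integral_has_integral_lebesgue[OF assms(3) hi] by simp
  also have "\<dots> \<le> (\<integral>\<^sup>+ s. ennreal (f s) * indicator {0..T} s \<partial>lborel)"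
    by (intro nn_integral_mono) (use assms(1) in \<open>auto simp: indicator_def\<close>)
  finally show ?thesis .
qed

lemma partA:
  fixes \<gamma> :: "real \<Rightarrow> 'a" and T :: real
  assumes T: "0 < T" and lip: "1-lipschitz_on {0..T} \<gamma>" and inO: "\<gamma> ` {0..<T} \<subseteq> \<Omega>"
    and inK: "\<gamma> ` {0..T} \<subseteq> closure \<Omega>"
  shows "ereal (u (\<gamma> 0)) \<le> enn2ereal (\<integral>\<^sup>+ s. ennreal (l (\<gamma> s)) * indicator {0..T} s \<partial>lborel) + ereal (u (\<gamma> T))"
proof (cases "(\<integral>\<^sup>+ s. ennreal (l (\<gamma> s)) * indicator {0..T} s \<partial>lborel) = \<infinity>")
  case True
  then show ?thesis by simp
next
  case False
  then obtain R where R: "(\<integral>\<^sup>+ s. ennreal (l (\<gamma> s)) * indicator {0..T} s \<partial>lborel) = ennreal R" "0 \<le> R"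
    by (cases "(\<integral>\<^sup>+ s. ennreal (l (\<gamma> s)) * indicator {0..T} s \<partial>lborel)") auto
  have gc: "continuous_on {0..T} \<gamma>" using lipschitz_on_continuous_on[OF lip] .
  have intR: "integral {0..t1} (\<lambda>s. l (\<gamma> s)) \<le> R" if t1: "t1 \<in> {0..<T}" for t1
  proof -
    have gc1: "continuous_on {0..t1} \<gamma>" by (rule continuous_on_subset[OF gc]) (use t1 in force)
    have sub: "\<gamma> ` {0..t1} \<subseteq> \<Omega>" using inO t1 by auto
    have fc: "continuous_on {0..t1} (\<lambda>s. l (\<gamma> s))"
      using continuous_on_compose2[OF lcont gc1 sub] .
    have "ennreal (integral {0..t1} (\<lambda>s. l (\<gamma> s))) \<le> ennreal R"
    proof -
      have "\<And>s. s \<in> {0..t1} \<Longrightarrow> 0 \<le> l (\<gamma> s)" using sub lpos by (meson image_subset_iff less_imp_le)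
      then show ?thesis using nn_le_of_integral[of t1 T "\<lambda>s. l (\<gamma> s)"] t1 fc R(1) by auto
    qed
    then show ?thesis using R(2) by (auto simp add: ennreal_le_iff2)
  qed
  have ugc: "continuous_on {0..T} (\<lambda>s. u (\<gamma> s))"
    using continuous_on_compose2[OF ucont gc inK] .
  have main: "u (\<gamma> 0) \<le> R + u (\<gamma> T)"
  proof (rule ccontr)
    assume neg: "\<not> ?thesis"
    define \<epsilon> where "\<epsilon> = (u (\<gamma> 0) - R - u (\<gamma> T)) / 3"
    have ep: "\<epsilon> > 0" using neg by (simp add: \<epsilon>_def)
    have TI: "T \<in> {0..T}" using T by auto
    from ugc[unfolded continuous_on_iff, rule_format, OF TI ep]
    obtain \<delta> where d: "\<delta> > 0" "\<And>s. s \<in> {0..T} \<Longrightarrow> dist s T < \<delta> \<Longrightarrow> dist (u (\<gamma> s)) (u (\<gamma> T)) < \<epsilon>"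
      by auto
    define t1 where "t1 = max 0 (T - \<delta>/2)"
    have t1I: "t1 \<in> {0..<T}" using T d(1) by (auto simp: t1_def)
    have "dist t1 T < \<delta>" using T d(1) by (auto simp: t1_def dist_real_def)
    then have c1: "u (\<gamma> t1) < u (\<gamma> T) + \<epsilon>" using d(2)[of t1] t1I by (auto simp: dist_real_def)
    have "u (\<gamma> 0) \<le> u (\<gamma> t1) + integral {0..t1} (\<lambda>s. l (\<gamma> s)) + (\<epsilon> / T) * t1"
      using partA_ineq[OF T lip inO t1I, of "\<epsilon>/T"] ep T by simp
    moreover have "(\<epsilon> / T) * t1 \<le> \<epsilon>"
    proof -
      have "(\<epsilon> / T) * t1 \<le> (\<epsilon> / T) * T" using t1I ep T by (intro mult_left_mono) auto
      then show ?thesis using T by simp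
    qed
    moreover have "3 * \<epsilon> = u (\<gamma> 0) - R - u (\<gamma> T)" by (simp add: \<epsilon>_def)
    ultimately show False using intR[OF t1I] c1 ep by linarith
  qed
  then show ?thesis using R by (simp add: enn2ereal_ennreal)
qed

end



context eik begin

lemma ubound: "\<exists>m. \<forall>y\<in>closure \<Omega>. m \<le> u y"
proof -
  have "compact (closure \<Omega>)" using cpt closed_closure compact_Int_closed[of UNIV "closure \<Omega>"] by simp
  then have "compact (u ` closure \<Omega>)" using compact_continuous_image ucont by blast
  then have "bounded (u ` closure \<Omega>)" by (rule compact_imp_bounded)
  then obtain a where "\<forall>x\<in>u ` closure \<Omega>. \<bar>x\<bar> \<le> a" by (auto simp: bounded_real)
  then show ?thesis by (intro exI[of _ "-a"]) force
qed

definition umin where "umin = (SOME m. \<forall>y\<in>closure \<Omega>. m \<le> u y)"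

lemma umin_le: "y \<in> closure \<Omega> \<Longrightarrow> umin \<le> u y"
  using someI_ex[OF ubound] unfolding umin_def by blast

context
  fixes r \<eta> :: real and x0 :: 'a
  assumes rp: "0 < r" and ep: "0 < \<eta>" and ec: "\<eta> < c" and x0: "x0 \<in> \<Omega>"
begin

definition Aset where "Aset x = {y \<in> closure \<Omega>. 0 < dist x y \<and> dist x y < r \<and> u y \<le> u x - (l x - \<eta>) * dist x y}"
definition sig where "sig x = Sup (dist x ` Aset x)"
definition nxt where "nxt x = (SOME y. y \<in> Aset x \<and> sig x < 2 * dist x y)"
definition stp where "stp x = (if x \<in> \<Omega> then nxt x else x)"
definition ch where "ch i = (stp ^^ i) x0"
definition dch where "dch i = dist (ch i) (ch (Suc i))"
definition tt where "tt k = (\<Sum>i<k. dch i)"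

lemma Aset_ne: assumes "x \<in> \<Omega>" shows "Aset x \<noteq> {}"
proof -
  have lx: "c \<le> l x" using lc assms by auto
  obtain y where y: "y \<in> closure \<Omega>" "0 < dist x y" "dist x y < r" "(l x - \<eta>) * dist x y < max (u x - u y) 0"
    using slope_lower[OF assms, of "l x - \<eta>" r] ep rp by auto
  have "(l x - \<eta>) * dist x y > 0" using lx ec ep y(2) by simp
  then have "u y \<le> u x - (l x - \<eta>) * dist x y" using y(4) by linarith
  then show ?thesis using y unfolding Aset_def by blast
qed

lemma Aset_bdd: "bdd_above (dist x ` Aset x)"
  by (rule bdd_aboveI[of _ r]) (auto simp: Aset_def)

lemma sig_ge: "y \<in> Aset x \<Longrightarrow> dist x y \<le> sig x"
  unfolding sig_def using Aset_bdd by (intro cSup_upper) auto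

lemma nxt_prop: assumes "x \<in> \<Omega>" shows "nxt x \<in> Aset x \<and> sig x < 2 * dist x (nxt x)"
proof -
  obtain y0 where y0: "y0 \<in> Aset x" using Aset_ne[OF assms] by auto
  have "0 < dist x y0" using y0 by (auto simp: Aset_def)
  then have sp: "0 < sig x" using sig_ge[OF y0] by linarith
  then have h: "sig x / 2 < Sup (dist x ` Aset x)" unfolding sig_def by simp
  have ne: "dist x ` Aset x \<noteq> {}" using Aset_ne[OF assms] by simp
  have "\<exists>v\<in>dist x ` Aset x. sig x / 2 < v"
    using less_cSup_iff[OF ne Aset_bdd, of "sig x / 2"] h by simp
  then obtain y where y: "y \<in> Aset x" "sig x / 2 < dist x y" by auto
  then have "\<exists>y. y \<in> Aset x \<and> sig x < 2 * dist x y" by (intro exI[of _ y]) auto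
  from someI_ex[OF this] show ?thesis unfolding nxt_def .
qed

lemma ch_0: "ch 0 = x0" by (simp add: ch_def)
lemma ch_Suc: "ch (Suc i) = stp (ch i)" by (simp add: ch_def)

lemma ch_K: "ch i \<in> closure \<Omega>"
proof (induction i)
  case 0 then show ?case using x0 closure_subset by (auto simp: ch_0)
next
  case (Suc i)
  then show ?case using nxt_prop[of "ch i"] by (auto simp: ch_Suc stp_def Aset_def)
qed

lemma dch_nonneg: "0 \<le> dch i" by (simp add: dch_def)

lemma dch_lt: "dch i < r"
  using nxt_prop[of "ch i"] rp by (auto simp: dch_def ch_Suc stp_def Aset_def)

lemma dch_posO: "0 < dch i \<Longrightarrow> ch i \<in> \<Omega>"
  by (auto simp: dch_def ch_Suc stp_def split: if_splits)

lemma u_step: "u (ch (Suc i)) \<le> u (ch i) - (l (ch i) - \<eta>) * dch i"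
proof (cases "ch i \<in> \<Omega>")
  case True
  then show ?thesis using nxt_prop[OF True] by (auto simp: dch_def ch_Suc stp_def Aset_def)
next
  case False
  then show ?thesis by (simp add: dch_def ch_Suc stp_def)
qed

lemma u_step_c: "(c - \<eta>) * dch i \<le> u (ch i) - u (ch (Suc i))"
proof (cases "dch i > 0")
  case True
  then have "c \<le> l (ch i)" using dch_posO lc by auto
  then have "(c - \<eta>) * dch i \<le> (l (ch i) - \<eta>) * dch i" using dch_nonneg by (intro mult_right_mono) auto
  then show ?thesis using u_step[of i] by linarith
next
  case False
  then have "dch i = 0" using dch_nonneg[of i] by linarith
  then show ?thesis using u_step[of i] by simp
qed

lemma u_dec: "i \<le> j \<Longrightarrow> u (ch j) \<le> u (ch i)"
proof (induction j)
  case 0 then show ?case by simp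
next
  case (Suc j)
  have "(c - \<eta>) * dch j \<ge> 0" using ec dch_nonneg by simp
  then have "u (ch (Suc j)) \<le> u (ch j)" using u_step_c[of j] by linarith
  then show ?case using Suc by (cases "i = Suc j") auto
qed

lemma tt_0: "tt 0 = 0" by (simp add: tt_def)
lemma tt_Suc: "tt (Suc k) = tt k + dch k" by (simp add: tt_def)
lemma tt_mono: "i \<le> j \<Longrightarrow> tt i \<le> tt j"
  unfolding tt_def by (rule sum_mono2) (auto simp: dch_nonneg)

lemma sum_cost: "(\<Sum>i<k. (l (ch i) - \<eta>) * dch i) \<le> u x0 - u (ch k)"
proof (induction k)
  case 0 then show ?case by (simp add: ch_0)
next
  case (Suc k) then show ?case using u_step[of k] by simp
qed

lemma tt_bound: "(c - \<eta>) * tt k \<le> u x0 - u (ch k)"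
proof (induction k)
  case 0 then show ?case by (simp add: ch_0 tt_0)
next
  case (Suc k) then show ?case using u_step_c[of k] by (simp add: tt_Suc algebra_simps)
qed

definition Bd where "Bd = (u x0 - umin) / (c - \<eta>)"

lemma tt_le_Bd: "tt k \<le> Bd"
proof -
  have "(c - \<eta>) * tt k \<le> u x0 - umin" using tt_bound[of k] umin_le[OF ch_K[of k]] by linarith
  then show ?thesis unfolding Bd_def using ec by (simp add: pos_le_divide_eq mult.commute)
qed

lemma dch_summable: "summable dch"
  using tt_le_Bd by (intro summableI_nonneg_bounded[of _ Bd]) (auto simp: dch_nonneg tt_def)

definition LL where "LL = suminf dch"

lemma tt_LL: "tt \<longlonglongrightarrow> LL"
  unfolding tt_def LL_def using summable_LIMSEQ[OF dch_summable] by simp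

lemma tt_le_LL: "tt k \<le> LL"
  unfolding tt_def LL_def using dch_summable by (intro sum_le_suminf) (auto simp: dch_nonneg)

lemma LL_le_Bd: "LL \<le> Bd"
  using tt_LL tt_le_Bd by (intro LIMSEQ_le_const2) auto

lemma dist_ch: "i \<le> j \<Longrightarrow> dist (ch i) (ch j) \<le> tt j - tt i"
proof (induction j)
  case 0 then show ?case by simp
next
  case (Suc j)
  show ?case
  proof (cases "i = Suc j")
    case True then show ?thesis by simp
  next
    case False
    then have "i \<le> j" using Suc by simp
    have "dist (ch i) (ch (Suc j)) \<le> dist (ch i) (ch j) + dch j"
      unfolding dch_def by (rule dist_triangle)
    then show ?thesis using Suc.IH[OF \<open>i \<le> j\<close>] by (simp add: tt_Suc)
  qed
qed

lemma ch_Cauchy: "Cauchy ch"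
proof (rule metric_CauchyI)
  fix e :: real assume e: "0 < e"
  have "Cauchy tt" using tt_LL by (rule LIMSEQ_imp_Cauchy)
  then obtain M where M: "\<And>m n. m \<ge> M \<Longrightarrow> n \<ge> M \<Longrightarrow> dist (tt m) (tt n) < e"
    using e by (meson metric_CauchyD)
  have "dist (ch m) (ch n) < e" if "m \<ge> M" "n \<ge> M" for m n
  proof (cases "m \<le> n")
    case True
    then have "dist (ch m) (ch n) \<le> tt n - tt m" by (rule dist_ch)
    also have "\<dots> \<le> dist (tt m) (tt n)" by (simp add: dist_real_def)
    finally show ?thesis using M[OF that] by linarith
  next
    case False
    then have "dist (ch n) (ch m) \<le> tt m - tt n" by (intro dist_ch) simp
    also have "\<dots> \<le> dist (tt m) (tt n)" by (simp add: dist_real_def)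
    finally show ?thesis using M[OF that] by (simp add: dist_commute)
  qed
  then show "\<exists>M. \<forall>m\<ge>M. \<forall>n\<ge>M. dist (ch m) (ch n) < e" by blast
qed

lemma ch_conv: "\<exists>z. ch \<longlonglongrightarrow> z"
proof -
  have "complete (UNIV::'a set)" using compact_imp_complete[OF cpt] .
  then show ?thesis using ch_Cauchy unfolding complete_def by blast
qed

definition zz where "zz = lim ch"

lemma ch_zz: "ch \<longlonglongrightarrow> zz"
  using ch_conv convergent_LIMSEQ_iff convergent_def unfolding zz_def by blast

lemma zz_K: "zz \<in> closure \<Omega>"
  using closed_sequentially[OF closed_closure ch_K ch_zz] .

lemma dist_ch_zz: "dist (ch i) zz \<le> LL - tt i"
proof -
  have a: "(\<lambda>j. dist (ch i) (ch j)) \<longlonglongrightarrow> dist (ch i) zz" by (intro tendsto_intros ch_zz)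
  have b: "(\<lambda>j. tt j - tt i) \<longlonglongrightarrow> LL - tt i" by (intro tendsto_intros tt_LL)
  have e: "\<forall>\<^sub>F j in sequentially. dist (ch i) (ch j) \<le> tt j - tt i"
    using dist_ch by (auto simp: eventually_sequentially)
  show ?thesis by (rule tendsto_le[OF trivial_limit_sequentially b a e])
qed

lemma ch_const: "ch i \<notin> \<Omega> \<Longrightarrow> ch (i + k) = ch i"
  by (induction k) (auto simp: ch_Suc stp_def)

lemma zz_notO: "zz \<notin> \<Omega>"
proof
  assume zO: "zz \<in> \<Omega>"
  show False
  proof (cases "\<forall>i. ch i \<in> \<Omega>")
    case False
    then obtain i where i: "ch i \<notin> \<Omega>" by auto
    have "\<forall>\<^sub>F j in sequentially. ch j = ch i"
      unfolding eventually_sequentially using ch_const[OF i] by (metis le_add_diff_inverse)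
    then have "ch \<longlonglongrightarrow> ch i" by (rule tendsto_eventually)
    then have "zz = ch i" using ch_zz LIMSEQ_unique by blast
    then show False using i zO by simp
  next
    case True
    have dz: "dch \<longlonglongrightarrow> 0" using summable_LIMSEQ_zero[OF dch_summable] .
    have lconv: "(\<lambda>i. l (ch i)) \<longlonglongrightarrow> l zz"
      using lcont[unfolded continuous_on_sequentially] True zO ch_zz by (auto simp: o_def)
    have uconv: "(\<lambda>i. u (ch i)) \<longlonglongrightarrow> u zz"
      using ucont[unfolded continuous_on_sequentially] ch_K zz_K ch_zz by (auto simp: o_def)
    have uge: "u zz \<le> u (ch i)" for i
      using uconv by (rule LIMSEQ_le_const2) (use u_dec in auto)
    have lzz: "c \<le> l zz" using lc zO by auto
    obtain y where y: "y \<in> closure \<Omega>" "0 < dist zz y" "dist zz y < r/2"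
      "(l zz - \<eta>/2) * dist zz y < max (u zz - u y) 0"
      using slope_lower[OF zO, of "l zz - \<eta>/2" "r/2"] ep rp by auto
    define s where "s = dist zz y"
    have sp: "0 < s" "s < r/2" using y by (auto simp: s_def)
    have "(l zz - \<eta>/2) * s > 0" using lzz ec ep sp by simp
    then have uy: "u y < u zz - (l zz - \<eta>/2) * s" using y(4) unfolding s_def by linarith
    have dconv: "(\<lambda>i. dist (ch i) zz) \<longlonglongrightarrow> 0"
      using tendsto_dist[OF ch_zz tendsto_const[of zz]] by simp
    have ev1: "\<forall>\<^sub>F i in sequentially. dist (ch i) zz < s/2"
      using order_tendstoD(2)[OF dconv, of "s/2"] sp by simp
    have ev2: "\<forall>\<^sub>F i in sequentially. dch i < s/4"
      using order_tendstoD(2)[OF dz, of "s/4"] sp by simp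
    have conv3: "(\<lambda>i. (l (ch i) - \<eta>) * (s + dist (ch i) zz)) \<longlonglongrightarrow> (l zz - \<eta>) * (s + 0)"
      by (intro tendsto_intros lconv dconv)
    have "(l zz - \<eta>) * (s + 0) < (l zz - \<eta>/2) * s" using sp ep by (simp add: algebra_simps)
    then have ev3: "\<forall>\<^sub>F i in sequentially. (l (ch i) - \<eta>) * (s + dist (ch i) zz) < (l zz - \<eta>/2) * s"
      using order_tendstoD(2)[OF conv3] by simp
    from eventually_conj[OF ev1 eventually_conj[OF ev2 ev3]]
    obtain i where i: "dist (ch i) zz < s/2" "dch i < s/4"
      "(l (ch i) - \<eta>) * (s + dist (ch i) zz) < (l zz - \<eta>/2) * s"
      unfolding eventually_sequentially by blast
    define e where "e = dist (ch i) zz"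
    have ciO: "ch i \<in> \<Omega>" using True by auto
    have lci: "c \<le> l (ch i)" using lc ciO by auto
    have d1: "s \<le> e + dist (ch i) y" unfolding s_def e_def
      using dist_triangle[of zz y "ch i"] by (simp add: dist_commute)
    have d2: "dist (ch i) y \<le> e + s" unfolding s_def e_def
      using dist_triangle[of "ch i" y zz] by simp
    have "(l (ch i) - \<eta>) * dist (ch i) y \<le> (l (ch i) - \<eta>) * (s + e)"
      using d2 lci ec by (intro mult_left_mono) auto
    then have "u y \<le> u (ch i) - (l (ch i) - \<eta>) * dist (ch i) y"
      using uy uge[of i] i(3) unfolding e_def by linarith
    moreover have "0 < dist (ch i) y" "dist (ch i) y < r" using d1 d2 i(1) sp unfolding e_def by auto
    ultimately have yA: "y \<in> Aset (ch i)" using y(1) by (auto simp: Aset_def)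
    have "s/2 < sig (ch i)" using sig_ge[OF yA] d1 i(1) unfolding e_def by linarith
    moreover have "sig (ch i) < 2 * dch i"
      using nxt_prop[OF ciO] by (simp add: dch_def ch_Suc stp_def ciO)
    ultimately show False using i(2) by linarith
  qed
qed

lemma zz_frontier: "zz \<in> frontier \<Omega>"
  using zz_K zz_notO opn by (simp add: frontier_def interior_open)

definition idx where "idx s = (LEAST i. s < tt (Suc i))"
definition ph where "ph s = (if s < LL then ch (idx s) else zz)"

lemma idx_ex: assumes "s < LL" shows "\<exists>i. s < tt (Suc i)"
proof -
  have "\<forall>\<^sub>F n in sequentially. s < tt n" using order_tendstoD(1)[OF tt_LL assms] .
  then obtain N where "\<forall>n\<ge>N. s < tt n" unfolding eventually_sequentially by blast
  then show ?thesis by (intro exI[of _ N]) auto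
qed

lemma idx_lt: "s < LL \<Longrightarrow> s < tt (Suc (idx s))"
  unfolding idx_def using idx_ex by (rule LeastI_ex)

lemma idx_le: "s < tt (Suc j) \<Longrightarrow> idx s \<le> j"
  unfolding idx_def by (rule Least_le)

lemma idx_ge: assumes "0 \<le> s" shows "tt (idx s) \<le> s"
proof (cases "idx s")
  case 0 then show ?thesis using assms by (simp add: tt_0)
next
  case (Suc k)
  then have "k < idx s" by simp
  then have "\<not> s < tt (Suc k)" unfolding idx_def by (rule not_less_Least)
  then show ?thesis using Suc by simp
qed

lemma ph_K: "ph s \<in> closure \<Omega>"
  using ch_K zz_K by (simp add: ph_def)

lemma dch0: "0 < dch 0"
  using nxt_prop[OF x0] by (simp add: dch_def ch_Suc ch_0 stp_def x0 Aset_def)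

lemma LL_pos: "0 < LL"
  using tt_le_LL[of 1] dch0 by (simp add: tt_def)

lemma ph_0: "ph 0 = x0"
proof -
  have "idx 0 = 0" using idx_le[of 0 0] dch0 by (simp add: tt_def)
  then show ?thesis using LL_pos by (simp add: ph_def ch_0)
qed

lemma ph_far: "Bd \<le> s \<Longrightarrow> ph s = zz"
  using LL_le_Bd by (simp add: ph_def)

lemma ph_lip: assumes "0 \<le> s" "s \<le> s'" shows "dist (ph s) (ph s') \<le> s' - s + r"
proof -
  have aux: "tt (idx s) > s - r" if "s < LL"
    using idx_lt[OF that] dch_lt[of "idx s"] by (simp add: tt_Suc)
  show ?thesis
  proof (cases "s' < LL")
    case True
    then have sL: "s < LL" using assms by simp
    have ij: "idx s \<le> idx s'" using idx_lt[OF True] assms by (intro idx_le) simp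
    have "dist (ph s) (ph s') = dist (ch (idx s)) (ch (idx s'))" using True sL by (simp add: ph_def)
    also have "\<dots> \<le> tt (idx s') - tt (idx s)" using dist_ch[OF ij] .
    also have "\<dots> \<le> s' - s + r" using idx_ge[of s'] aux[OF sL] assms by simp
    finally show ?thesis .
  next
    case False
    show ?thesis
    proof (cases "s < LL")
      case True
      have "dist (ph s) (ph s') = dist (ch (idx s)) zz" using True False by (simp add: ph_def)
      also have "\<dots> \<le> LL - tt (idx s)" by (rule dist_ch_zz)
      also have "\<dots> \<le> s' - s + r" using aux[OF True] False by simp
      finally show ?thesis .
    next
      case False
      then show ?thesis using \<open>\<not> s' < LL\<close> assms rp by (simp add: ph_def)
    qed
  qed
qed

lemma ph_seg: assumes "tt i \<le> s" "s \<le> tt (Suc i)" "s < LL"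
  shows "dist (ph s) (ch i) \<le> dch i"
proof -
  have s0: "0 \<le> s" using assms(1) tt_mono[of 0 i] by (simp add: tt_0)
  define j where "j = idx s"
  have "\<not> j < i"
  proof
    assume "j < i"
    then have "tt (Suc j) \<le> tt i" by (intro tt_mono) simp
    then show False using idx_lt[OF assms(3)] assms(1) unfolding j_def by simp
  qed
  then have ij: "i \<le> j" by simp
  have "dist (ph s) (ch i) = dist (ch i) (ch j)" using assms(3) by (simp add: ph_def j_def dist_commute)
  also have "\<dots> \<le> tt j - tt i" using dist_ch[OF ij] .
  also have "\<dots> \<le> dch i" using idx_ge[OF s0] assms(2) unfolding j_def by (simp add: tt_Suc)
  finally show ?thesis .
qed

lemma sum_integral_tt:
  fixes f :: "real \<Rightarrow> real"
  assumes "f integrable_on {0..t}" "tt k \<le> t"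
  shows "integral {0..tt k} f = (\<Sum>i<k. integral {tt i..tt (Suc i)} f)"
  using assms(2)
proof (induction k)
  case 0 then show ?case by (simp add: tt_0)
next
  case (Suc k)
  have le: "tt k \<le> tt (Suc k)" by (intro tt_mono) simp
  have t0: "0 \<le> tt k" using tt_mono[of 0 k] by (simp add: tt_0)
  have int: "f integrable_on {0..tt (Suc k)}"
    by (rule integrable_on_subinterval[OF assms(1)]) (use Suc.prems in auto)
  have "integral {0..tt (Suc k)} f = integral {0..tt k} f + integral {tt k..tt (Suc k)} f"
    using Henstock_Kurzweil_Integration.integral_combine[OF t0 le int] by simp
  then show ?case using Suc le by simp
qed

lemma chain_integral_bound:
  fixes f :: "real \<Rightarrow> real"
  assumes t0: "0 \<le> t" and fc: "continuous_on {0..t} f" and pO: "ph t \<in> \<Omega>" and dl: "0 \<le> \<delta>"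
    and hyp: "\<And>s y. s \<in> {0..t} \<Longrightarrow> dist (ph s) y < r \<Longrightarrow> f s \<le> l y + \<delta>"
  shows "integral {0..t} f \<le> u x0 - u (ph t) + (\<eta> + \<delta>) * t + max 0 (l (ph t) + \<delta>) * r"
proof -
  have tL: "t < LL"
  proof (rule ccontr)
    assume "\<not> t < LL"
    then have "ph t = zz" by (simp add: ph_def)
    then show False using pO zz_notO by simp
  qed
  define j where "j = idx t"
  have phj: "ph t = ch j" using tL by (simp add: ph_def j_def)
  have tj: "tt j \<le> t" "t < tt (Suc j)" using idx_ge[OF t0] idx_lt[OF tL] by (auto simp: j_def)
  have int: "f integrable_on {0..t}" using integrable_continuous_interval[OF fc] .
  have ttnn: "0 \<le> tt i" for i using tt_mono[of 0 i] by (simp add: tt_0)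
  have piece: "integral {tt i..tt (Suc i)} f \<le> (l (ch i) + \<delta>) * dch i" if ij: "i < j" for i
  proof -
    have le: "tt (Suc i) \<le> tt j" using ij by (intro tt_mono) simp
    have ile: "tt i \<le> tt (Suc i)" by (intro tt_mono) simp
    have intI: "f integrable_on {tt i..tt (Suc i)}"
      by (rule integrable_on_subinterval[OF int]) (use le tj ttnn in auto)
    have "f s \<le> l (ch i) + \<delta>" if s: "s \<in> {tt i..tt (Suc i)}" for s
    proof -
      have "s < LL" "s \<in> {0..t}" using s le tj tL ttnn[of i] by auto
      then have "dist (ph s) (ch i) < r" using ph_seg[of i s] s dch_lt[of i] by auto
      then show ?thesis using hyp \<open>s \<in> {0..t}\<close> by blast
    qed
    then have "integral {tt i..tt (Suc i)} f \<le> integral {tt i..tt (Suc i)} (\<lambda>_. l (ch i) + \<delta>)"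
      by (intro integral_le intI) auto
    also have "\<dots> = (l (ch i) + \<delta>) * dch i" using ile by (simp add: content_real tt_Suc)
    finally show ?thesis .
  qed
  have "integral {0..tt j} f = (\<Sum>i<j. integral {tt i..tt (Suc i)} f)"
    using sum_integral_tt[OF int tj(1)] .
  also have "\<dots> \<le> (\<Sum>i<j. (l (ch i) + \<delta>) * dch i)" using piece by (intro sum_mono) auto
  also have "\<dots> = (\<Sum>i<j. (l (ch i) - \<eta>) * dch i) + (\<eta> + \<delta>) * tt j"
    by (simp add: tt_def sum.distrib[symmetric] sum_distrib_left algebra_simps)
  also have "\<dots> \<le> u x0 - u (ch j) + (\<eta> + \<delta>) * tt j" using sum_cost[of j] by simp
  finally have A: "integral {0..tt j} f \<le> u x0 - u (ch j) + (\<eta> + \<delta>) * tt j" .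
  have last: "f s \<le> l (ch j) + \<delta>" if s: "s \<in> {tt j..t}" for s
  proof -
    have "s < LL" "s \<in> {0..t}" using s tj tL ttnn[of j] by auto
    then have "dist (ph s) (ch j) < r" using ph_seg[of j s] s tj dch_lt[of j] by auto
    then show ?thesis using hyp \<open>s \<in> {0..t}\<close> by blast
  qed
  have intL: "f integrable_on {tt j..t}"
    by (rule integrable_on_subinterval[OF int]) (use ttnn in auto)
  have "integral {tt j..t} f \<le> integral {tt j..t} (\<lambda>_. l (ch j) + \<delta>)"
    by (intro integral_le intL) (use last in auto)
  also have "\<dots> = (l (ch j) + \<delta>) * (t - tt j)" using tj by (simp add: content_real)
  also have "\<dots> \<le> max 0 (l (ch j) + \<delta>) * r"
  proof -
    have "t - tt j \<le> r" using tj dch_lt[of j] by (simp add: tt_Suc)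
    then have "(l (ch j) + \<delta>) * (t - tt j) \<le> max 0 (l (ch j) + \<delta>) * (t - tt j)"
      using tj by (intro mult_right_mono) auto
    also have "\<dots> \<le> max 0 (l (ch j) + \<delta>) * r"
      using \<open>t - tt j \<le> r\<close> by (intro mult_left_mono) auto
    finally show ?thesis .
  qed
  finally have B: "integral {tt j..t} f \<le> max 0 (l (ch j) + \<delta>) * r" .
  have C: "integral {0..t} f = integral {0..tt j} f + integral {tt j..t} f"
    using Henstock_Kurzweil_Integration.integral_combine[OF ttnn tj(1) int] by simp
  have "(\<eta> + \<delta>) * tt j \<le> (\<eta> + \<delta>) * t" using tj ep dl by (intro mult_left_mono) auto
  then show ?thesis using A B C phj by simp
qed

lemma ph_notin: "\<not> s < LL \<Longrightarrow> ph s \<in> frontier \<Omega>"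
  using zz_frontier by (simp add: ph_def)

end
end


context eik begin

lemma nn_upper:
  fixes \<gamma> :: "real \<Rightarrow> 'a" and T b :: real
  assumes T: "0 < T" and gc: "continuous_on {0..T} \<gamma>" and inO: "\<gamma> ` {0..<T} \<subseteq> \<Omega>"
    and bound: "\<And>t. t \<in> {0..<T} \<Longrightarrow> integral {0..t} (\<lambda>s. l (\<gamma> s)) \<le> b"
  shows "(\<integral>\<^sup>+ s. ennreal (l (\<gamma> s)) * indicator {0..T} s \<partial>lborel) \<le> ennreal b"
proof -
  define a where "a n = T - T / real (n + 2)" for n :: nat
  have a_in: "a n \<in> {0..<T}" for n
  proof -
    have "T / real (n + 2) \<le> T" using T by (simp add: divide_le_eq)
    moreover have "T / real (n + 2) > 0" using T by simp
    ultimately show ?thesis by (simp add: a_def)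
  qed
  have a_mono: "a n \<le> a (Suc n)" for n
    unfolding a_def using T by (simp add: frac_le)
  define f where "f n s = ennreal (l (\<gamma> s)) * indicator {0..a n} s" for n s
  have contn: "continuous_on {0..a n} (\<lambda>s. l (\<gamma> s))" for n
  proof -
    have g1: "continuous_on {0..a n} \<gamma>" by (rule continuous_on_subset[OF gc]) (use a_in[of n] in force)
    have g2: "\<gamma> ` {0..a n} \<subseteq> \<Omega>" using inO a_in[of n] by force
    show ?thesis using continuous_on_compose2[OF lcont g1 g2] .
  qed
  have nonneg: "s \<in> {0..a n} \<Longrightarrow> 0 \<le> l (\<gamma> s)" for s n
  proof -
    assume s: "s \<in> {0..a n}"
    then have "s \<in> {0..<T}" using a_in[of n] by auto
    then have "\<gamma> s \<in> \<Omega>" using inO by auto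
    then show ?thesis using lpos less_imp_le by blast
  qed
  have meas: "f n \<in> borel_measurable lborel" for n
  proof -
    have "(\<lambda>s. indicator {0..a n} s *\<^sub>R l (\<gamma> s)) \<in> borel_measurable borel"
      by (rule borel_measurable_continuous_on_indicator[OF _ contn]) simp
    then have "(\<lambda>s. ennreal (indicator {0..a n} s *\<^sub>R l (\<gamma> s))) \<in> borel_measurable borel"
      by (rule measurable_compose[OF _ measurable_ennreal])
    moreover have "(\<lambda>s. ennreal (indicator {0..a n} s *\<^sub>R l (\<gamma> s))) = f n"
      by (auto simp: f_def indicator_def fun_eq_iff)
    ultimately show ?thesis by simp
  qed
  have inc: "incseq f"
  proof (rule incseq_SucI, rule le_funI)
    fix n s show "f n s \<le> f (Suc n) s"
      using a_mono[of n] by (auto simp: f_def indicator_def)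
  qed
  have fint: "integral\<^sup>N lborel (f n) \<le> ennreal b" for n
  proof -
    have hi: "((\<lambda>s. l (\<gamma> s)) has_integral integral {0..a n} (\<lambda>s. l (\<gamma> s))) {0..a n}"
      using integrable_continuous_interval[OF contn] by (simp add: integrable_integral)
    have "integral\<^sup>N lborel (f n) = (\<integral>\<^sup>+ s. ennreal (indicator {0..a n} s * l (\<gamma> s)) \<partial>lborel)"
      by (intro nn_integral_cong) (auto simp: f_def indicator_def)
    also have "\<dots> = ennreal (integral {0..a n} (\<lambda>s. l (\<gamma> s)))"
      by (rule nn_integral_has_integral_lebesgue[OF _ hi]) (rule nonneg)
    also have "\<dots> \<le> ennreal b" using bound[OF a_in[of n]] by (rule ennreal_leI)
    finally show ?thesis .
  qed
  have supf: "(SUP n. f n s) = ennreal (l (\<gamma> s)) * indicator {0..<T} s" for s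
  proof (cases "s \<in> {0..<T}")
    case True
    have Ts: "0 < T - s" using True by simp
    obtain N :: nat where N: "T / (T - s) < real N" using reals_Archimedean2 by blast
    have "T < (T - s) * real N" using N Ts by (simp add: divide_less_eq mult.commute)
    also have "\<dots> \<le> (T - s) * real (N + 2)" using Ts by (intro mult_left_mono) auto
    finally have "T / real (N + 2) < T - s" by (simp add: divide_less_eq mult.commute)
    then have "s \<le> a N" by (simp add: a_def)
    then have "f N s = ennreal (l (\<gamma> s)) * indicator {0..<T} s" using True by (simp add: f_def indicator_def)
    moreover have "f n s \<le> ennreal (l (\<gamma> s)) * indicator {0..<T} s" for n
      using True by (auto simp: f_def indicator_def)
    ultimately show ?thesis by (metis (mono_tags, lifting) SUP_upper antisym SUP_least UNIV_I)
  next
    case False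
    then have "f n s = 0" for n using a_in[of n] by (auto simp: f_def indicator_def)
    then show ?thesis using False by simp
  qed
  have "(\<integral>\<^sup>+ s. ennreal (l (\<gamma> s)) * indicator {0..T} s \<partial>lborel) = (\<integral>\<^sup>+ s. (SUP n. f n s) \<partial>lborel)"
    unfolding supf
    by (intro nn_integral_cong_AE) (use AE_lborel_singleton[of T] in \<open>eventually_elim, auto simp: indicator_def\<close>)
  also have "\<dots> = (SUP n. integral\<^sup>N lborel (f n))"
    by (rule nn_integral_monotone_convergence_SUP[OF inc meas])
  also have "\<dots> \<le> ennreal b" using fint by (intro SUP_least) auto
  finally show ?thesis .
qed

lemma unif_l:
  assumes C: "compact C" "C \<subseteq> \<Omega>" and dp: "\<delta> > 0"
  obtains e where "e > 0" "\<And>p y. p \<in> C \<Longrightarrow> dist y p < e \<Longrightarrow> y \<in> \<Omega> \<and> \<bar>l y - l p\<bar> < \<delta>"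
proof -
  have "\<exists>\<rho>>0. ball p \<rho> \<subseteq> \<Omega> \<and> (\<forall>y\<in>ball p \<rho>. \<bar>l y - l p\<bar> < \<delta>/2)" if p: "p \<in> C" for p
  proof -
    have pO: "p \<in> \<Omega>" using p C by auto
    obtain \<rho>1 where r1: "\<rho>1 > 0" "ball p \<rho>1 \<subseteq> \<Omega>" using opn pO open_contains_ball by blast
    obtain \<rho>2 where r2: "\<rho>2 > 0" "\<And>y. y \<in> \<Omega> \<Longrightarrow> dist y p < \<rho>2 \<Longrightarrow> dist (l y) (l p) < \<delta>/2"
      using lcont[unfolded continuous_on_iff] pO dp by (metis half_gt_zero)
    show ?thesis
      using r1 r2 by (intro exI[of _ "min \<rho>1 \<rho>2"]) (auto simp: dist_real_def dist_commute subset_iff)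
  qed
  then obtain \<rho> where rho: "\<And>p. p \<in> C \<Longrightarrow> \<rho> p > 0 \<and> ball p (\<rho> p) \<subseteq> \<Omega> \<and> (\<forall>y\<in>ball p (\<rho> p). \<bar>l y - l p\<bar> < \<delta>/2)"
    by metis
  have cov: "C \<subseteq> \<Union> ((\<lambda>p. ball p (\<rho> p)) ` C)" using rho by force
  obtain e where e: "e > 0" "\<And>x. x \<in> C \<Longrightarrow> \<exists>G\<in>(\<lambda>p. ball p (\<rho> p)) ` C. ball x e \<subseteq> G"
    using Heine_Borel_lemma[OF C(1) cov] by blast
  show thesis
  proof (rule that[OF e(1)])
    fix p y assume p: "p \<in> C" and y: "dist y p < e"
    obtain q where q: "q \<in> C" "ball p e \<subseteq> ball q (\<rho> q)" using e(2)[OF p] by auto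
    have "y \<in> ball p e" "p \<in> ball p e" using y e(1) by (auto simp: dist_commute)
    then have "y \<in> ball q (\<rho> q)" "p \<in> ball q (\<rho> q)" using q(2) by blast+
    then have "y \<in> \<Omega>" "\<bar>l y - l q\<bar> < \<delta>/2" "\<bar>l p - l q\<bar> < \<delta>/2" using rho[OF q(1)] by auto
    then show "y \<in> \<Omega> \<and> \<bar>l y - l p\<bar> < \<delta>" by linarith
  qed
qed


lemma diag_conv:
  fixes F :: "nat \<Rightarrow> real \<Rightarrow> 'a"
  obtains k where "strict_mono (k :: nat \<Rightarrow> nat)" "\<And>q. q \<in> \<rat> \<Longrightarrow> \<exists>L. (\<lambda>n. F (k n) q) \<longlonglongrightarrow> L"
proof -
  have "countable \<rat>" by (rule countable_rat)
  moreover have "\<rat> \<noteq> {}" using Rats_0 by blast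
  ultimately obtain \<sigma> :: "nat \<Rightarrow> real" where \<sigma>: "\<rat> = range \<sigma>"
    using range_from_nat_into by metis
  obtain k where "strict_mono k" and k: "\<And>i. \<exists>L. (\<lambda>n. (F \<circ> k) n (\<sigma> i)) \<longlonglongrightarrow> L"
  proof (rule subsequence_diagonalization_lemma
      [of "\<lambda>i r. \<exists>L. ((\<lambda>n. (F \<circ> r) n (\<sigma> i)) \<longlongrightarrow> L) sequentially" id])
    show "\<exists>k::nat\<Rightarrow>nat. strict_mono k \<and> (\<exists>L. (\<lambda>n. (F \<circ> (r \<circ> k)) n (\<sigma> i)) \<longlonglongrightarrow> L)" for i r
    proof -
      have "\<forall>n. F (r n) (\<sigma> i) \<in> (UNIV::'a set)" by simp
      then obtain L k where k: "strict_mono k" "((\<lambda>n. F (r n) (\<sigma> i)) \<circ> k) \<longlonglongrightarrow> L"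
        using cpt[unfolded compact_def, rule_format, of "\<lambda>n. F (r n) (\<sigma> i)"] by blast
      show ?thesis
        by (rule exI[of _ k]) (use k in \<open>auto simp add: o_def\<close>)
    qed
    show "\<exists>L. (\<lambda>n. (F \<circ> (r \<circ> k2)) n (\<sigma> i)) \<longlonglongrightarrow> L"
      if h1: "\<exists>L. (\<lambda>n. (F \<circ> (r \<circ> k1)) n (\<sigma> i)) \<longlonglongrightarrow> L" and h2: "\<And>j. N \<le> j \<Longrightarrow> \<exists>j'\<ge>j. k2 j = k1 j'"
      for i N and r k1 k2 :: "nat\<Rightarrow>nat"
    proof -
      obtain L where L: "(\<lambda>n. (F \<circ> (r \<circ> k1)) n (\<sigma> i)) \<longlonglongrightarrow> L" using h1 by blast
      have "(\<lambda>n. (F \<circ> (r \<circ> k2)) n (\<sigma> i)) \<longlonglongrightarrow> L"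
        unfolding lim_sequentially
      proof (intro allI impI)
        fix e :: real assume e: "0 < e"
        obtain M where M: "\<And>n. n \<ge> M \<Longrightarrow> dist ((F \<circ> (r \<circ> k1)) n (\<sigma> i)) L < e"
          using L e unfolding lim_sequentially by blast
        have "dist ((F \<circ> (r \<circ> k2)) n (\<sigma> i)) L < e" if "n \<ge> max N M" for n
        proof -
          obtain j' where "j' \<ge> n" "k2 n = k1 j'" using h2[of n] \<open>n \<ge> max N M\<close> by auto
          then show ?thesis using M[of j'] \<open>n \<ge> max N M\<close> by simp
        qed
        then show "\<exists>no. \<forall>n\<ge>no. dist ((F \<circ> (r \<circ> k2)) n (\<sigma> i)) L < e" by blast
      qed
      then show ?thesis by blast
    qed
  qed auto
  with \<sigma> that show ?thesis
    by force
qed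

end

context eik begin

lemma partB:
  assumes x: "x \<in> \<Omega>" and eps: "0 < \<epsilon>"
  shows "\<exists>T \<gamma>. (T, \<gamma>) \<in> admissible_curves \<Omega> x \<and>
     enn2ereal (\<integral>\<^sup>+ s. ennreal (l (\<gamma> s)) * indicator {0..T} s \<partial>lborel) + ereal (u (\<gamma> T)) \<le> ereal (u x) + ereal \<epsilon>"
proof -
  have xK: "x \<in> closure \<Omega>" using x closure_subset by auto
  have um: "umin \<le> u x" using umin_le[OF xK] .
  define B0 where "B0 = 2 * (u x - umin) / c + 1"
  have B0p: "0 < B0"
  proof -
    have "0 \<le> 2 * (u x - umin) / c" using um cpos by simp
    then show ?thesis by (simp add: B0_def)
  qed
  define \<eta> where "\<eta> = min (c/2) (\<epsilon> / (2*B0))"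
  have etap: "0 < \<eta>" using cpos eps B0p by (simp add: \<eta>_def)
  have etac: "\<eta> < c" using cpos by (simp add: \<eta>_def)
  have etaB: "\<eta> * B0 \<le> \<epsilon>/2"
  proof -
    have "\<eta> \<le> \<epsilon> / (2*B0)" by (simp add: \<eta>_def)
    then have "\<eta> * B0 \<le> \<epsilon>/(2*B0) * B0" using B0p by (intro mult_right_mono) auto
    then show ?thesis using B0p by simp
  qed
  define rn where "rn n = 1 / real (Suc n)" for n
  have rnp: "0 < rn n" for n by (simp add: rn_def)
  have Bd_le: "Bd \<eta> x \<le> B0"
  proof -
    have "Bd \<eta> x = (u x - umin) / (c - \<eta>)" using Bd_def[OF rnp etap etac x] by simp
    also have "\<dots> \<le> (u x - umin) / (c/2)"
      using um etap cpos by (intro divide_left_mono) (auto simp: \<eta>_def)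
    also have "\<dots> = 2 * (u x - umin) / c" by simp
    also have "\<dots> \<le> B0" unfolding B0_def by linarith
    finally show ?thesis .
  qed
  define \<Phi> where "\<Phi> n = ph (rn n) \<eta> x" for n
  have F1: "\<Phi> n s \<in> closure \<Omega>" for n s using ph_K[OF rnp etap etac x] by (simp add: \<Phi>_def)
  have F2: "\<Phi> n 0 = x" for n using ph_0[OF rnp etap etac x] by (simp add: \<Phi>_def)
  have F3: "\<Phi> n B0 \<in> frontier \<Omega>" for n
    using ph_far[OF rnp etap etac x Bd_le] zz_frontier[OF rnp etap etac x] by (simp add: \<Phi>_def)
  have F4: "dist (\<Phi> n s) (\<Phi> n s') \<le> \<bar>s' - s\<bar> + rn n" if "0 \<le> s" "0 \<le> s'" for n s s'
  proof (cases "s \<le> s'")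
    case True then show ?thesis using ph_lip[OF rnp etap etac x that(1) True] by (simp add: \<Phi>_def)
  next
    case False then show ?thesis using ph_lip[OF rnp etap etac x that(2), of s] by (simp add: \<Phi>_def dist_commute)
  qed
  obtain k where k: "strict_mono k" "\<And>q. q \<in> \<rat> \<Longrightarrow> \<exists>L. (\<lambda>n. \<Phi> (k n) q) \<longlonglongrightarrow> L"
    using diag_conv[of \<Phi>] by blast
  have rk: "rn (k n) \<le> rn n" for n
  proof -
    have "n \<le> k n" using seq_suble[OF k(1)] .
    then show ?thesis by (simp add: rn_def frac_le)
  qed
  have rsmall: "\<exists>N. \<forall>n\<ge>N. rn (k n) < e" if e0: "0 < e" for e
  proof -
    obtain N where N: "inverse (real (Suc N)) < e" using reals_Archimedean[OF e0] by blast
    have "rn (k n) < e" if "n \<ge> N" for n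
    proof -
      have "rn (k n) \<le> rn n" by (rule rk)
      also have "rn n \<le> rn N" using that by (simp add: rn_def frac_le)
      also have "rn N < e" using N by (simp add: rn_def inverse_eq_divide)
      finally show ?thesis .
    qed
    then show ?thesis by blast
  qed
  have rlim: "(\<lambda>n. rn (k n)) \<longlonglongrightarrow> 0"
    unfolding lim_sequentially
  proof (intro allI impI)
    fix e :: real assume "0 < e"
    then obtain N where N: "\<forall>n\<ge>N. rn (k n) < e" using rsmall by blast
    have "dist (rn (k n)) 0 < e" if "n \<ge> N" for n
      using N that rnp[of "k n"] by (simp add: dist_real_def)
    then show "\<exists>no. \<forall>n\<ge>no. dist (rn (k n)) 0 < e" by blast
  qed
  have cauchy: "Cauchy (\<lambda>n. \<Phi> (k n) t)" if t: "0 \<le> t" for t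
  proof (rule metric_CauchyI)
    fix e :: real assume e: "0 < e"
    obtain q where q: "q \<in> \<rat>" "t < q" "q < t + e/5" using Rats_dense_in_real[of t "t + e/5"] e by auto
    obtain L where L: "(\<lambda>n. \<Phi> (k n) q) \<longlonglongrightarrow> L" using k(2)[OF q(1)] by blast
    then have "Cauchy (\<lambda>n. \<Phi> (k n) q)" by (rule LIMSEQ_imp_Cauchy)
    moreover have "0 < e/5" using e by simp
    ultimately obtain M1 where M1: "\<And>m n. m \<ge> M1 \<Longrightarrow> n \<ge> M1 \<Longrightarrow> dist (\<Phi> (k m) q) (\<Phi> (k n) q) < e/5"
      using metric_CauchyD by blast
    obtain M2 where M2: "\<And>n. n \<ge> M2 \<Longrightarrow> rn (k n) < e/5" using rsmall[of "e/5"] e by auto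
    have "dist (\<Phi> (k m) t) (\<Phi> (k n) t) < e" if mn: "m \<ge> max M1 M2" "n \<ge> max M1 M2" for m n
    proof -
      have q0: "0 \<le> q" using t q by simp
      have a1: "dist (\<Phi> (k m) t) (\<Phi> (k m) q) \<le> \<bar>q - t\<bar> + rn (k m)" using F4[OF t q0] .
      have a2: "dist (\<Phi> (k n) q) (\<Phi> (k n) t) \<le> \<bar>t - q\<bar> + rn (k n)" using F4[OF q0 t] .
      have a3: "dist (\<Phi> (k m) q) (\<Phi> (k n) q) < e/5" using M1 mn by auto
      have a4: "rn (k m) < e/5" "rn (k n) < e/5" using M2 mn by auto
      have "dist (\<Phi> (k m) t) (\<Phi> (k n) t) \<le> dist (\<Phi> (k m) t) (\<Phi> (k m) q) + dist (\<Phi> (k m) q) (\<Phi> (k n) t)"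
        by (rule dist_triangle)
      also have "dist (\<Phi> (k m) q) (\<Phi> (k n) t) \<le> dist (\<Phi> (k m) q) (\<Phi> (k n) q) + dist (\<Phi> (k n) q) (\<Phi> (k n) t)"
        by (rule dist_triangle)
      finally have tri: "dist (\<Phi> (k m) t) (\<Phi> (k n) t) \<le> dist (\<Phi> (k m) t) (\<Phi> (k m) q) + (dist (\<Phi> (k m) q) (\<Phi> (k n) q) + dist (\<Phi> (k n) q) (\<Phi> (k n) t))"
        by simp
      have "\<bar>q - t\<bar> < e/5" "\<bar>t - q\<bar> < e/5" using q by auto
      then show ?thesis using tri a1 a2 a3 a4 by linarith
    qed
    then show "\<exists>M. \<forall>m\<ge>M. \<forall>n\<ge>M. dist (\<Phi> (k m) t) (\<Phi> (k n) t) < e" by blast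
  qed
  have compl: "complete (UNIV::'a set)" using compact_imp_complete[OF cpt] .
  define \<gamma> where "\<gamma> t = lim (\<lambda>n. \<Phi> (k n) t)" for t
  have conv: "(\<lambda>n. \<Phi> (k n) t) \<longlonglongrightarrow> \<gamma> t" if t0: "0 \<le> t" for t
  proof -
    obtain L where "(\<lambda>n. \<Phi> (k n) t) \<longlonglongrightarrow> L" using compl cauchy[OF t0] unfolding complete_def by blast
    then show ?thesis unfolding \<gamma>_def using convergent_LIMSEQ_iff convergent_def by blast
  qed
  have G1: "\<gamma> t \<in> closure \<Omega>" if "0 \<le> t" for t
    using closed_sequentially[OF closed_closure _ conv[OF that]] F1 by blast
  have G2: "dist (\<gamma> s) (\<gamma> t) \<le> \<bar>t - s\<bar>" if st: "0 \<le> s" "0 \<le> t" for s t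
  proof -
    have a: "(\<lambda>n. dist (\<Phi> (k n) s) (\<Phi> (k n) t)) \<longlonglongrightarrow> dist (\<gamma> s) (\<gamma> t)"
      by (intro tendsto_intros conv st)
    have b: "(\<lambda>n. \<bar>t - s\<bar> + rn (k n)) \<longlonglongrightarrow> \<bar>t - s\<bar> + 0" by (intro tendsto_intros rlim)
    have e: "\<forall>\<^sub>F n in sequentially. dist (\<Phi> (k n) s) (\<Phi> (k n) t) \<le> \<bar>t - s\<bar> + rn (k n)"
      using F4[OF st] by simp
    show ?thesis using tendsto_le[OF trivial_limit_sequentially b a e] by simp
  qed
  have G3: "\<gamma> 0 = x"
  proof -
    have "(\<lambda>n. \<Phi> (k n) 0) \<longlonglongrightarrow> x" using F2 by simp
    then show ?thesis using conv[of 0] LIMSEQ_unique by auto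
  qed
  have G4: "\<gamma> B0 \<in> frontier \<Omega>"
    using closed_sequentially[OF frontier_closed _ conv] F3 B0p by (meson less_imp_le)
  have glip: "1-lipschitz_on {0..B0} \<gamma>"
    by (rule lipschitz_onI) (use G2 in \<open>auto simp: dist_real_def abs_minus_commute\<close>)
  have gcont: "continuous_on {0..B0} \<gamma>" using lipschitz_on_continuous_on[OF glip] .
  have G5: "\<exists>N. \<forall>n\<ge>N. \<forall>s\<in>{0..B0}. dist (\<Phi> (k n) s) (\<gamma> s) < e" if e: "0 < e" for e
  proof -
    have sc: "seq_compact {0..B0}" by (simp add: compact_imp_seq_compact)
    have "0 < e/4" using e by simp
    from seq_compact_imp_totally_bounded[OF sc, rule_format, OF this]
    obtain F where F0: "finite F \<and> F \<subseteq> {0..B0} \<and> {0..B0} \<subseteq> (\<Union>q\<in>F. ball q (e/4))"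
      by (elim exE)
    then have F: "finite F" "F \<subseteq> {0..B0}" "{0..B0} \<subseteq> (\<Union>q\<in>F. ball q (e/4))" by auto
    have "\<forall>q\<in>F. \<forall>\<^sub>F n in sequentially. dist (\<Phi> (k n) q) (\<gamma> q) < e/4"
    proof
      fix q assume "q \<in> F"
      then have "0 \<le> q" using F by auto
      then show "\<forall>\<^sub>F n in sequentially. dist (\<Phi> (k n) q) (\<gamma> q) < e/4"
        using conv[unfolded tendsto_iff] \<open>0 < e/4\<close> by blast
    qed
    then have "\<forall>\<^sub>F n in sequentially. \<forall>q\<in>F. dist (\<Phi> (k n) q) (\<gamma> q) < e/4"
      using F(1) by (intro eventually_ball_finite) auto
    then obtain N1 where N1: "\<And>n q. n \<ge> N1 \<Longrightarrow> q \<in> F \<Longrightarrow> dist (\<Phi> (k n) q) (\<gamma> q) < e/4"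
      unfolding eventually_sequentially by blast
    obtain N2 where N2: "\<And>n. n \<ge> N2 \<Longrightarrow> rn (k n) < e/4" using rsmall \<open>0 < e/4\<close> by blast
    have "dist (\<Phi> (k n) s) (\<gamma> s) < e" if n: "n \<ge> max N1 N2" and s: "s \<in> {0..B0}" for n s
    proof -
      have "s \<in> (\<Union>q\<in>F. ball q (e/4))" using F(3) s by (rule subsetD)
      then obtain q where q: "q \<in> F" "dist q s < e/4" by auto
      have q0: "0 \<le> q" using q F by auto
      have s0: "0 \<le> s" using s by auto
      have b1: "dist (\<Phi> (k n) s) (\<Phi> (k n) q) \<le> \<bar>q - s\<bar> + rn (k n)" using F4[OF s0 q0] .
      have b2: "dist (\<Phi> (k n) q) (\<gamma> q) < e/4" using N1 n q by auto
      have b3: "dist (\<gamma> q) (\<gamma> s) \<le> \<bar>s - q\<bar>" using G2[OF q0 s0] .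
      have b4: "rn (k n) < e/4" using N2 n by auto
      have "dist (\<Phi> (k n) s) (\<gamma> s) \<le> dist (\<Phi> (k n) s) (\<Phi> (k n) q) + dist (\<Phi> (k n) q) (\<gamma> s)"
        by (rule dist_triangle)
      also have "dist (\<Phi> (k n) q) (\<gamma> s) \<le> dist (\<Phi> (k n) q) (\<gamma> q) + dist (\<gamma> q) (\<gamma> s)"
        by (rule dist_triangle)
      finally have tri: "dist (\<Phi> (k n) s) (\<gamma> s) \<le> dist (\<Phi> (k n) s) (\<Phi> (k n) q) + (dist (\<Phi> (k n) q) (\<gamma> q) + dist (\<gamma> q) (\<gamma> s))"
        by simp
      have "\<bar>q - s\<bar> < e/4" "\<bar>s - q\<bar> < e/4" using q(2) by (auto simp: dist_real_def abs_minus_commute)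
      then show ?thesis using tri b1 b2 b3 b4 by linarith
    qed
    then show ?thesis by blast
  qed
  define H where "H = {0..B0} \<inter> \<gamma> -` frontier \<Omega>"
  have Hne: "B0 \<in> H" using G4 B0p by (auto simp: H_def)
  have Hcl: "closed H" unfolding H_def by (intro continuous_closed_preimage gcont frontier_closed) simp
  have Hbdd: "bdd_below H" unfolding bdd_below_def H_def by auto
  define T where "T = Inf H"
  have TH: "T \<in> H" using closed_contains_Inf[OF _ Hbdd Hcl] Hne unfolding T_def by auto
  have TB0: "T \<le> B0" using cInf_lower[OF Hne Hbdd] unfolding T_def .
  have xnf: "x \<notin> frontier \<Omega>" using x opn by (simp add: frontier_def interior_open)
  have Tpos: "0 < T"
  proof -
    have "0 \<le> T" using TH by (auto simp: H_def)
    moreover have "T \<noteq> 0" using TH G3 xnf by (auto simp: H_def)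
    ultimately show ?thesis by simp
  qed
  have inO: "\<gamma> ` {0..<T} \<subseteq> \<Omega>"
  proof
    fix y assume "y \<in> \<gamma> ` {0..<T}"
    then obtain t where t: "t \<in> {0..<T}" "y = \<gamma> t" by auto
    have "\<gamma> t \<notin> frontier \<Omega>"
    proof
      assume "\<gamma> t \<in> frontier \<Omega>"
      then have "t \<in> H" using t TB0 by (auto simp: H_def)
      then have "T \<le> t" unfolding T_def using Hbdd by (rule cInf_lower)
      then show False using t by simp
    qed
    moreover have "\<gamma> t \<in> closure \<Omega>" using G1 t by auto
    ultimately show "y \<in> \<Omega>" using t opn by (simp add: frontier_def interior_open)
  qed
  have TF: "\<gamma> T \<in> frontier \<Omega>" using TH by (simp add: H_def)
  have lipT: "1-lipschitz_on {0..T} \<gamma>" using lipschitz_on_subset[OF glip] TB0 by auto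
  have adm: "(T, \<gamma>) \<in> admissible_curves \<Omega> x"
  proof -
    have img: "\<gamma> ` {0..T} \<subseteq> closure \<Omega>" using G1 by auto
    show ?thesis unfolding admissible_curves_def using Tpos lipT img G3 TF inO by simp
  qed
  have gcT: "continuous_on {0..T} \<gamma>" by (rule continuous_on_subset[OF gcont]) (use TB0 in auto)
  have key: "integral {0..t} (\<lambda>s. l (\<gamma> s)) \<le> u x - u (\<gamma> t) + \<eta> * t" if t: "t \<in> {0..<T}" for t
  proof (rule field_le_epsilon)
    fix \<epsilon>' :: real assume e': "0 < \<epsilon>'"
    have t0: "0 \<le> t" and tB: "t \<le> B0" using t TB0 by auto
    have gct: "continuous_on {0..t} \<gamma>" by (rule continuous_on_subset[OF gcont]) (use tB in auto)
    have CO: "\<gamma> ` {0..t} \<subseteq> \<Omega>" using inO t by auto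
    have Cc: "compact (\<gamma> ` {0..t})" using compact_continuous_image[OF gct] by simp
    have fc: "continuous_on {0..t} (\<lambda>s. l (\<gamma> s))" using continuous_on_compose2[OF lcont gct CO] .
    have gtO: "\<gamma> t \<in> \<Omega>" using CO t0 by auto
    define M where "M = l (\<gamma> t)"
    have Mp: "0 < M" using lpos[OF gtO] by (simp add: M_def)
    define \<delta> where "\<delta> = min 1 (\<epsilon>' / (3 * (t + 1)))"
    have dp: "0 < \<delta>" using e' t0 by (simp add: \<delta>_def)
    have d1: "\<delta> \<le> 1" by (simp add: \<delta>_def)
    have dt: "\<delta> * t \<le> \<epsilon>'/3"
    proof -
      have "\<delta> * t \<le> \<epsilon>' / (3 * (t + 1)) * t" using t0 by (intro mult_right_mono) (auto simp: \<delta>_def)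
      also have "\<dots> = \<epsilon>' / 3 * (t / (t + 1))" using t0 by (simp add: field_simps)
      also have "\<dots> \<le> \<epsilon>' / 3 * 1" using t0 e' by (intro mult_left_mono) auto
      finally show ?thesis by simp
    qed
    obtain e where e: "0 < e" "\<And>p y. p \<in> \<gamma> ` {0..t} \<Longrightarrow> dist y p < e \<Longrightarrow> y \<in> \<Omega> \<and> \<bar>l y - l p\<bar> < \<delta>"
      using unif_l[OF Cc CO dp] by blast
    obtain N1 where N1: "\<And>n s. n \<ge> N1 \<Longrightarrow> s \<in> {0..B0} \<Longrightarrow> dist (\<Phi> (k n) s) (\<gamma> s) < e/2"
      using G5[of "e/2"] e(1) by (metis half_gt_zero)
    have "0 < min (e/2) (\<epsilon>' / (3 * (M + 2)))" using e(1) e' Mp by simp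
    then obtain N2 where N2: "\<And>n. n \<ge> N2 \<Longrightarrow> rn (k n) < min (e/2) (\<epsilon>' / (3 * (M + 2)))"
      using rsmall by blast
    have uconv: "(\<lambda>n. u (\<Phi> (k n) t)) \<longlonglongrightarrow> u (\<gamma> t)"
      using ucont[unfolded continuous_on_sequentially] F1 G1[OF t0] conv[OF t0] by (auto simp: o_def)
    have "0 < \<epsilon>'/3" using e' by simp
    then obtain N3 where N3: "\<And>n. n \<ge> N3 \<Longrightarrow> dist (u (\<Phi> (k n) t)) (u (\<gamma> t)) < \<epsilon>'/3"
      using uconv[unfolded lim_sequentially] by blast
    define n where "n = max N1 (max N2 N3)"
    define r where "r = rn (k n)"
    have rp: "0 < r" using rnp by (simp add: r_def)
    have r1: "r < e/2" "r < \<epsilon>' / (3 * (M + 2))" using N2[of n] by (auto simp: n_def r_def)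
    have cl: "dist (\<Phi> (k n) s) (\<gamma> s) < e/2" if "s \<in> {0..t}" for s
      using N1[of n s] that tB by (auto simp: n_def)
    have u3: "u (\<gamma> t) - \<epsilon>'/3 < u (\<Phi> (k n) t)"
    proof -
      have "dist (u (\<Phi> (k n) t)) (u (\<gamma> t)) < \<epsilon>'/3" using N3[of n] by (simp add: n_def)
      then show ?thesis unfolding dist_real_def by linarith
    qed
    have phk: "\<Phi> (k n) = ph r \<eta> x" by (simp add: \<Phi>_def r_def)
    have pt: "dist (\<Phi> (k n) t) (\<gamma> t) < e"
    proof -
      have "dist (\<Phi> (k n) t) (\<gamma> t) < e/2" using cl[of t] t0 by auto
      then show ?thesis using e(1) by linarith
    qed
    have ptO: "\<Phi> (k n) t \<in> \<Omega>" and lpt: "\<bar>l (\<Phi> (k n) t) - M\<bar> < \<delta>"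
      using e(2)[of "\<gamma> t" "\<Phi> (k n) t"] pt t0 by (auto simp: M_def)
    have hyp: "l (\<gamma> s) \<le> l y + \<delta>" if s: "s \<in> {0..t}" and y: "dist (ph r \<eta> x s) y < r" for s y
    proof -
      have "dist y (\<gamma> s) \<le> dist y (\<Phi> (k n) s) + dist (\<Phi> (k n) s) (\<gamma> s)" by (rule dist_triangle)
      also have "\<dots> < r + e/2" using y cl[OF s] by (simp add: phk dist_commute add_strict_mono)
      also have "\<dots> < e" using r1 by simp
      finally have "dist y (\<gamma> s) < e" .
      then have "\<bar>l y - l (\<gamma> s)\<bar> < \<delta>" using e(2)[of "\<gamma> s" y] s by auto
      then show ?thesis by linarith
    qed
    have cib: "integral {0..t} (\<lambda>s. l (\<gamma> s)) \<le> u x - u (ph r \<eta> x t) + (\<eta> + \<delta>) * t + max 0 (l (ph r \<eta> x t) + \<delta>) * r"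
      by (rule chain_integral_bound[OF rp etap etac x t0 fc _ _ hyp]) (use ptO phk dp in auto)
    have "max 0 (l (ph r \<eta> x t) + \<delta>) \<le> M + 2" using lpt d1 Mp phk by auto
    then have "max 0 (l (ph r \<eta> x t) + \<delta>) * r \<le> (M + 2) * r" using rp by (intro mult_right_mono) auto
    also have "\<dots> \<le> \<epsilon>'/3" using r1(2) Mp by (simp add: field_simps)
    finally have mr: "max 0 (l (ph r \<eta> x t) + \<delta>) * r \<le> \<epsilon>'/3" .
    have "(\<eta> + \<delta>) * t = \<eta> * t + \<delta> * t" by (simp add: algebra_simps)
    then show "integral {0..t} (\<lambda>s. l (\<gamma> s)) \<le> u x - u (\<gamma> t) + \<eta> * t + \<epsilon>'"
      using cib mr dt u3 phk by simp
  qed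
  define NN where "NN = (\<integral>\<^sup>+ s. ennreal (l (\<gamma> s)) * indicator {0..T} s \<partial>lborel)"
  have ucg: "continuous_on {0..T} (\<lambda>s. u (\<gamma> s))"
  proof -
    have "\<gamma> ` {0..T} \<subseteq> closure \<Omega>" using G1 by auto
    then show ?thesis using continuous_on_compose2[OF ucont gcT] by blast
  qed
  have bnd: "NN \<le> ennreal (u x - u (\<gamma> T) + \<eta> * T + e) \<and> 0 \<le> u x - u (\<gamma> T) + \<eta> * T + e" if e: "0 < e" for e
  proof -
    have TI: "T \<in> {0..T}" using Tpos by auto
    from ucg[unfolded continuous_on_iff, rule_format, OF TI e]
    obtain d where d: "0 < d" "\<And>s. s \<in> {0..T} \<Longrightarrow> dist s T < d \<Longrightarrow> dist (u (\<gamma> s)) (u (\<gamma> T)) < e"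
      by auto
    define t0 where "t0 = max 0 (T - d/2)"
    have t0I: "t0 \<in> {0..<T}" using Tpos d(1) by (auto simp: t0_def)
    define b where "b = u x - u (\<gamma> T) + \<eta> * T + e"
    have bt: "integral {0..t} (\<lambda>s. l (\<gamma> s)) \<le> b" if tt0: "t0 \<le> t" "t < T" for t
    proof -
      have tI: "t \<in> {0..<T}" using tt0 t0I by auto
      have "dist t T < d" using tt0 d(1) by (auto simp: t0_def dist_real_def)
      then have "u (\<gamma> T) - e < u (\<gamma> t)" using d(2)[of t] tI by (auto simp: dist_real_def)
      moreover have "\<eta> * t \<le> \<eta> * T" using tt0 etap by (intro mult_left_mono) auto
      ultimately show ?thesis using key[OF tI] by (simp add: b_def)
    qed
    have cont_l: "continuous_on {0..t} (\<lambda>s. l (\<gamma> s))" if "t \<in> {0..<T}" for t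
    proof -
      have gct: "continuous_on {0..t} \<gamma>" by (rule continuous_on_subset[OF gcT]) (use that in auto)
      have CO: "\<gamma> ` {0..t} \<subseteq> \<Omega>" using inO that by auto
      show ?thesis using continuous_on_compose2[OF lcont gct CO] .
    qed
    have nonneg: "0 \<le> l (\<gamma> s)" if "s \<in> {0..<T}" for s
      using inO that lpos less_imp_le by blast
    have all: "integral {0..t} (\<lambda>s. l (\<gamma> s)) \<le> b" if tI: "t \<in> {0..<T}" for t
    proof (cases "t0 \<le> t")
      case True then show ?thesis using bt tI by auto
    next
      case False
      have "integral {0..t} (\<lambda>s. l (\<gamma> s)) \<le> integral {0..t0} (\<lambda>s. l (\<gamma> s))"
        using False tI t0I nonneg
        by (intro integral_subset_le integrable_continuous_interval cont_l) auto
      also have "\<dots> \<le> b" using bt[of t0] t0I by auto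
      finally show ?thesis .
    qed
    have "0 \<le> integral {0..t0} (\<lambda>s. l (\<gamma> s))"
      using t0I nonneg by (intro integral_nonneg integrable_continuous_interval cont_l) auto
    then have b0: "0 \<le> b" using bt[of t0] t0I by auto
    show ?thesis using nn_upper[OF Tpos gcT inO all] b0 unfolding NN_def b_def by simp
  qed
  have NNfin: "NN \<noteq> \<infinity>" using bnd[of 1] by (auto simp: top_unique)
  then obtain R where R: "NN = ennreal R" "0 \<le> R" by (cases NN) auto
  have Rb: "R \<le> u x - u (\<gamma> T) + \<eta> * T"
  proof (rule field_le_epsilon)
    fix e :: real assume e: "0 < e"
    have "ennreal R \<le> ennreal (u x - u (\<gamma> T) + \<eta> * T + e)" using bnd[OF e] R by simp
    moreover have "0 \<le> u x - u (\<gamma> T) + \<eta> * T + e" using bnd[OF e] by simp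
    ultimately show "R \<le> u x - u (\<gamma> T) + \<eta> * T + e" using R(2) by (simp add: ennreal_le_iff)
  qed
  have "\<eta> * T \<le> \<eta> * B0" using TB0 etap by (intro mult_left_mono) auto
  then have "R + u (\<gamma> T) \<le> u x + \<epsilon>" using Rb etaB eps by linarith
  then have "enn2ereal NN + ereal (u (\<gamma> T)) \<le> ereal (u x) + ereal \<epsilon>"
    using R by (simp add: enn2ereal_ennreal)
  then show ?thesis using adm unfolding NN_def by blast
qed

end

theorem corollary3p5:
  fixes \<Omega> :: "'a::metric_space set" and l g :: "'a \<Rightarrow> real"
  assumes "compact (UNIV :: 'a set)"
    and "open \<Omega>" and "\<Omega> \<noteq> {}"
    and "continuous_on \<Omega> l"
    and "\<exists>c>0. \<forall>x\<in>\<Omega>. c \<le> l x"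
    and "continuous_on (frontier \<Omega>) g"
  shows "(\<forall>u v. cont_pointwise_solution \<Omega> l g u \<and> cont_pointwise_solution \<Omega> l g v
            \<longrightarrow> (\<forall>x\<in>closure \<Omega>. u x = v x))
       \<and> (\<forall>u. cont_pointwise_solution \<Omega> l g u \<longrightarrow>
            (\<forall>x\<in>\<Omega>. ereal (u x) = (INF p\<in>admissible_curves \<Omega> x. curve_cost l g (fst p) (snd p))))"
proof -
  obtain c where c: "c > 0" "\<And>x. x \<in> \<Omega> \<Longrightarrow> c \<le> l x" using assms(5) by blast
  have formula: "ereal (u x) = (INF p\<in>admissible_curves \<Omega> x. curve_cost l g (fst p) (snd p))"
    if sol: "cont_pointwise_solution \<Omega> l g u" and x: "x \<in> \<Omega>" for u x
  proof -
    have E: "eik \<Omega> l u c"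
      using assms(1,2,4) c sol unfolding cont_pointwise_solution_def by unfold_locales auto
    have ug: "\<And>y. y \<in> frontier \<Omega> \<Longrightarrow> u y = g y" using sol unfolding cont_pointwise_solution_def by auto
    show ?thesis
    proof (rule antisym)
      show "ereal (u x) \<le> (INF p\<in>admissible_curves \<Omega> x. curve_cost l g (fst p) (snd p))"
      proof (rule INF_greatest)
        fix p assume p: "p \<in> admissible_curves \<Omega> x"
        obtain T \<gamma> where pe: "p = (T, \<gamma>)" by (cases p)
        have a: "T > 0" "1-lipschitz_on {0..T} \<gamma>" "\<gamma> ` {0..T} \<subseteq> closure \<Omega>" "\<gamma> 0 = x"
          "\<gamma> T \<in> frontier \<Omega>" "\<gamma> ` {0..<T} \<subseteq> \<Omega>"
          using p pe unfolding admissible_curves_def by auto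
        have "ereal (u (\<gamma> 0)) \<le> enn2ereal (\<integral>\<^sup>+ s. ennreal (l (\<gamma> s)) * indicator {0..T} s \<partial>lborel) + ereal (u (\<gamma> T))"
          using eik.partA[OF E a(1) a(2) a(6) a(3)] .
        then show "ereal (u x) \<le> curve_cost l g (fst p) (snd p)"
          using a(4) ug[OF a(5)] pe by (simp add: curve_cost_def)
      qed
      show "(INF p\<in>admissible_curves \<Omega> x. curve_cost l g (fst p) (snd p)) \<le> ereal (u x)"
      proof (rule ereal_le_epsilon2)
        fix e :: real assume e: "0 < e"
        obtain T \<gamma> where adm: "(T, \<gamma>) \<in> admissible_curves \<Omega> x" and
          b: "enn2ereal (\<integral>\<^sup>+ s. ennreal (l (\<gamma> s)) * indicator {0..T} s \<partial>lborel) + ereal (u (\<gamma> T)) \<le> ereal (u x) + ereal e"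
          using eik.partB[OF E x e] by blast
        have "\<gamma> T \<in> frontier \<Omega>" using adm unfolding admissible_curves_def by auto
        then have cc: "curve_cost l g T \<gamma> \<le> ereal (u x) + ereal e"
          using b ug by (simp add: curve_cost_def)
        have "(INF p\<in>admissible_curves \<Omega> x. curve_cost l g (fst p) (snd p)) \<le> curve_cost l g (fst (T, \<gamma>)) (snd (T, \<gamma>))"
          by (rule INF_lower[OF adm])
        then show "(INF p\<in>admissible_curves \<Omega> x. curve_cost l g (fst p) (snd p)) \<le> ereal (u x) + ereal e"
          using cc by simp
      qed
    qed
  qed
  have uniq: "u y = v y" if su: "cont_pointwise_solution \<Omega> l g u" and sv: "cont_pointwise_solution \<Omega> l g v"
    and y: "y \<in> closure \<Omega>" for u v y
  proof (cases "y \<in> \<Omega>")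
    case True
    then have "ereal (u y) = ereal (v y)" using formula[OF su True] formula[OF sv True] by simp
    then show ?thesis by simp
  next
    case False
    then have "y \<in> frontier \<Omega>" using y assms(2) by (simp add: frontier_def interior_open)
    then show ?thesis using su sv unfolding cont_pointwise_solution_def by auto
  qed
  show ?thesis using uniq formula by blast
qed

end
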